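(* Let $(\mathfrak g,[\cdot,\cdot]_{\mathfrak g},E)$ be an ENL algebra, $(W;T,\rho)$ an ENE-representation of it, and $K:W\to\mathfrak g$ an ENE-relative Rota–Baxter operator with respect to $(W;T,\rho)$. Let $\bar K\in(\mathfrak g\oplus W^* )\otimes(\mathfrak g\oplus W^* )$ be the element corresponding to $K$ under $\mathrm{Hom}(W,\mathfrak g)\cong\mathfrak g\otimes W^*$, and $r_K:=\bar K-\sigma(\bar K)$ where $\sigma$ is the flip. Then $r_K$ is a skew-symmetric solution of the classical Yang–Baxter equation in the semidirect product ENL algebra $(\mathfrak g\ltimes_{\rho^*}W^*,E+T^* )$; that is, $[\![r_K,r_K]\!]=0$ in $\mathfrak g\ltimes_{\rho^*}W^*$ and $((E+T^* )\otimes\mathrm{Id}-\mathrm{Id}\otimes(E+T^* ))(r_K)=0$.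
   Context: All vector spaces are finite-dimensional over an algebraically closed field of characteristic zero. An ENL algebra is a Lie algebra with linear $E$ such that $E[x,y]=[x,Ey]$ for all $x,y$. An ENE-representation $(W;T,\rho)$ of $(\mathfrak g,E)$ is a representation $\rho:\mathfrak g\to\mathfrak{gl}(W)$ with linear $T:W\to W$ such that $T(\rho(x)u)=\rho(Ex)u=\rho(x)(Tu)$. An ENE-relative Rota–Baxter operator is a linear $K:W\to\mathfrak g$ with $[Ku,Kv]_{\mathfrak g}=K(\rho(Ku)v-\rho(Kv)u)$ for all $u,v\in W$ and $E\circ K=K\circ T$. The dual representation is $\langle\rho^*(x)\xi,u\rangle=-\langle\xi,\rho(x)u\rangle$, $T^*$ is the dual map of $T$. The semidirect product $\mathfrak g\ltimes_{\rho^*}W^*$ is $\mathfrak g\oplus W^*$ with bracket $[x+\xi,y+\eta]=[x,y]_{\mathfrak g}+\rho^*(x)\eta-\rho^*(y)\xi$, with operator $(E+T^* )(x+\xi)=Ex+T^*\xi$. Concretely $\bar K=\sum_iK(w_i)\otimes w_i^*$ for a basis $(w_i)$ of $W$ with dual basis $(w_i^* )$. For $r=\sum a_i\otimes b_i$, $[\![r,r]\!]=[r_{12},r_{13}]+[r_{13},r_{23}]+[r_{12},r_{23}]$ in the tensor cube of the universal enveloping algebra. *)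

theory Defs
  imports "HOL-Library.Function_Algebras" "HOL-Computational_Algebra.Polynomial"
begin

text \<open>Finite-dimensional vector spaces are modelled in coordinates: a space with a basis
indexed by the finite type 'i is 'i \<Rightarrow> 'k. The standard basis vectors are unitv i.\<close>

definition scl :: "'k::field \<Rightarrow> ('i \<Rightarrow> 'k) \<Rightarrow> ('i \<Rightarrow> 'k)" where
  "scl c x = (\<lambda>a. c * x a)"

definition unitv :: "'i \<Rightarrow> ('i \<Rightarrow> 'k::field)" where
  "unitv i = (\<lambda>l. if l = i then 1 else 0)"

definition lin :: "(('i \<Rightarrow> 'k::field) \<Rightarrow> ('j \<Rightarrow> 'k)) \<Rightarrow> bool" where
  "lin f \<longleftrightarrow> (\<forall>x y. f (x + y) = f x + f y) \<and> (\<forall>c x. f (scl c x) = scl c (f x))"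

definition alg_closed :: "'k::field itself \<Rightarrow> bool" where
  "alg_closed _ \<longleftrightarrow> (\<forall>p :: 'k poly. degree p \<noteq> 0 \<longrightarrow> (\<exists>x. poly p x = 0))"

definition lie_algebra :: "(('i \<Rightarrow> 'k::field) \<Rightarrow> ('i \<Rightarrow> 'k) \<Rightarrow> ('i \<Rightarrow> 'k)) \<Rightarrow> bool" where
  "lie_algebra br \<longleftrightarrow> (\<forall>x. lin (br x)) \<and> (\<forall>y. lin (\<lambda>x. br x y)) \<and> (\<forall>x. br x x = 0)
     \<and> (\<forall>x y z. br x (br y z) + br y (br z x) + br z (br x y) = 0)"

definition ENL :: "(('i \<Rightarrow> 'k::field) \<Rightarrow> ('i \<Rightarrow> 'k) \<Rightarrow> ('i \<Rightarrow> 'k)) \<Rightarrow> (('i \<Rightarrow> 'k) \<Rightarrow> ('i \<Rightarrow> 'k)) \<Rightarrow> bool" where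
  "ENL br E \<longleftrightarrow> lie_algebra br \<and> lin E \<and> (\<forall>x y. E (br x y) = br x (E y))"

definition representation ::
  "(('i \<Rightarrow> 'k::field) \<Rightarrow> ('i \<Rightarrow> 'k) \<Rightarrow> ('i \<Rightarrow> 'k)) \<Rightarrow> (('i \<Rightarrow> 'k) \<Rightarrow> ('j \<Rightarrow> 'k) \<Rightarrow> ('j \<Rightarrow> 'k)) \<Rightarrow> bool" where
  "representation br rho \<longleftrightarrow> (\<forall>u. lin (\<lambda>x. rho x u)) \<and> (\<forall>x. lin (rho x))
     \<and> (\<forall>x y u. rho (br x y) u = rho x (rho y u) - rho y (rho x u))"

definition ENE_rep ::
  "(('i \<Rightarrow> 'k::field) \<Rightarrow> ('i \<Rightarrow> 'k) \<Rightarrow> ('i \<Rightarrow> 'k)) \<Rightarrow> (('i \<Rightarrow> 'k) \<Rightarrow> ('i \<Rightarrow> 'k))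
    \<Rightarrow> (('j \<Rightarrow> 'k) \<Rightarrow> ('j \<Rightarrow> 'k)) \<Rightarrow> (('i \<Rightarrow> 'k) \<Rightarrow> ('j \<Rightarrow> 'k) \<Rightarrow> ('j \<Rightarrow> 'k)) \<Rightarrow> bool" where
  "ENE_rep br E T rho \<longleftrightarrow> representation br rho \<and> lin T
     \<and> (\<forall>x u. T (rho x u) = rho (E x) u \<and> rho (E x) u = rho x (T u))"

definition ENE_RB ::
  "(('i \<Rightarrow> 'k::field) \<Rightarrow> ('i \<Rightarrow> 'k) \<Rightarrow> ('i \<Rightarrow> 'k)) \<Rightarrow> (('i \<Rightarrow> 'k) \<Rightarrow> ('i \<Rightarrow> 'k))
    \<Rightarrow> (('j \<Rightarrow> 'k) \<Rightarrow> ('j \<Rightarrow> 'k)) \<Rightarrow> (('i \<Rightarrow> 'k) \<Rightarrow> ('j \<Rightarrow> 'k) \<Rightarrow> ('j \<Rightarrow> 'k))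
    \<Rightarrow> (('j \<Rightarrow> 'k) \<Rightarrow> ('i \<Rightarrow> 'k)) \<Rightarrow> bool" where
  "ENE_RB br E T rho K \<longleftrightarrow> lin K
     \<and> (\<forall>u v. br (K u) (K v) = K (rho (K u) v - rho (K v) u))
     \<and> (\<forall>u. E (K u) = K (T u))"

text \<open>Dual space W* in the dual basis: a functional is 'j \<Rightarrow> 'k, paired by
 <xi,u> = sum_j xi j * u j. Dual representation and dual map (transposes).\<close>

definition pairing :: "('j::finite \<Rightarrow> 'k::field) \<Rightarrow> ('j \<Rightarrow> 'k) \<Rightarrow> 'k" where
  "pairing xi u = (\<Sum>j\<in>UNIV. xi j * u j)"

definition dual_rep :: "(('i \<Rightarrow> 'k::field) \<Rightarrow> ('j::finite \<Rightarrow> 'k) \<Rightarrow> ('j \<Rightarrow> 'k))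
    \<Rightarrow> ('i \<Rightarrow> 'k) \<Rightarrow> ('j \<Rightarrow> 'k) \<Rightarrow> ('j \<Rightarrow> 'k)" where
  "dual_rep rho x xi = (\<lambda>j. - pairing xi (rho x (unitv j)))"

definition dual_map :: "(('j::finite \<Rightarrow> 'k::field) \<Rightarrow> ('j \<Rightarrow> 'k)) \<Rightarrow> ('j \<Rightarrow> 'k) \<Rightarrow> ('j \<Rightarrow> 'k)" where
  "dual_map T xi = (\<lambda>j. pairing xi (T (unitv j)))"

text \<open>The semidirect product g \<oplus> W*, with coordinates indexed by 'i + 'j.\<close>

definition gpart :: "('i + 'j \<Rightarrow> 'k) \<Rightarrow> ('i \<Rightarrow> 'k)" where
  "gpart z = (\<lambda>a. z (Inl a))"

definition wpart :: "('i + 'j \<Rightarrow> 'k) \<Rightarrow> ('j \<Rightarrow> 'k)" where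
  "wpart z = (\<lambda>j. z (Inr j))"

definition semidirect_br ::
  "(('i \<Rightarrow> 'k::field) \<Rightarrow> ('i \<Rightarrow> 'k) \<Rightarrow> ('i \<Rightarrow> 'k)) \<Rightarrow> (('i \<Rightarrow> 'k) \<Rightarrow> ('j::finite \<Rightarrow> 'k) \<Rightarrow> ('j \<Rightarrow> 'k))
    \<Rightarrow> ('i + 'j \<Rightarrow> 'k) \<Rightarrow> ('i + 'j \<Rightarrow> 'k) \<Rightarrow> ('i + 'j \<Rightarrow> 'k)" where
  "semidirect_br br rho z w =
     case_sum (br (gpart z) (gpart w))
       (dual_rep rho (gpart z) (wpart w) - dual_rep rho (gpart w) (wpart z))"

definition semidirect_op ::
  "(('i \<Rightarrow> 'k::field) \<Rightarrow> ('i \<Rightarrow> 'k)) \<Rightarrow> (('j::finite \<Rightarrow> 'k) \<Rightarrow> ('j \<Rightarrow> 'k))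
    \<Rightarrow> ('i + 'j \<Rightarrow> 'k) \<Rightarrow> ('i + 'j \<Rightarrow> 'k)" where
  "semidirect_op E T z = case_sum (E (gpart z)) (dual_map T (wpart z))"

text \<open>Tensors in L \<otimes> L (resp. L \<otimes> L \<otimes> L) for L = 'b \<Rightarrow> 'k are represented by their
coefficient arrays w.r.t. the basis unitv p \<otimes> unitv q.\<close>

definition flip :: "('b \<Rightarrow> 'b \<Rightarrow> 'k) \<Rightarrow> ('b \<Rightarrow> 'b \<Rightarrow> 'k)" where
  "flip r = (\<lambda>p q. r q p)"

text \<open>Kbar = sum_j K(w_j) \<otimes> w_j^*, an element of (g \<oplus> W*) \<otimes> (g \<oplus> W*).\<close>
definition Kbar :: "(('j \<Rightarrow> 'k::field) \<Rightarrow> ('i \<Rightarrow> 'k)) \<Rightarrow> ('i + 'j) \<Rightarrow> ('i + 'j) \<Rightarrow> 'k" where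
  "Kbar K p q = (case (p, q) of (Inl a, Inr j) \<Rightarrow> K (unitv j) a | _ \<Rightarrow> 0)"

definition rK :: "(('j \<Rightarrow> 'k::field) \<Rightarrow> ('i \<Rightarrow> 'k)) \<Rightarrow> ('i + 'j) \<Rightarrow> ('i + 'j) \<Rightarrow> 'k" where
  "rK K = (\<lambda>p q. Kbar K p q - flip (Kbar K) p q)"

text \<open>[[r,r]] = [r12,r13] + [r13,r23] + [r12,r23] for r = sum_{p,q} r p q e_p \<otimes> e_q, i.e.
 sum r p q r s t ([e_p,e_s] \<otimes> e_q \<otimes> e_t + e_p \<otimes> e_s \<otimes> [e_q,e_t] + e_p \<otimes> [e_q,e_s] \<otimes> e_t),
 given by its coefficient array.\<close>
definition cybe :: "(('b::finite \<Rightarrow> 'k::field) \<Rightarrow> ('b \<Rightarrow> 'k) \<Rightarrow> ('b \<Rightarrow> 'k))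
    \<Rightarrow> ('b \<Rightarrow> 'b \<Rightarrow> 'k) \<Rightarrow> 'b \<Rightarrow> 'b \<Rightarrow> 'b \<Rightarrow> 'k" where
  "cybe B r a b c =
      (\<Sum>p\<in>UNIV. \<Sum>s\<in>UNIV. r p b * r s c * B (unitv p) (unitv s) a)
    + (\<Sum>q\<in>UNIV. \<Sum>t\<in>UNIV. r a q * r b t * B (unitv q) (unitv t) c)
    + (\<Sum>q\<in>UNIV. \<Sum>s\<in>UNIV. r a q * r s c * B (unitv q) (unitv s) b)"

text \<open>(A \<otimes> Id - Id \<otimes> A)(r), as a coefficient array.\<close>
definition op_tensor_diff :: "(('b::finite \<Rightarrow> 'k::field) \<Rightarrow> ('b \<Rightarrow> 'k))
    \<Rightarrow> ('b \<Rightarrow> 'b \<Rightarrow> 'k) \<Rightarrow> 'b \<Rightarrow> 'b \<Rightarrow> 'k" where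
  "op_tensor_diff A r a b =
     (\<Sum>p\<in>UNIV. A (unitv p) a * r p b) - (\<Sum>q\<in>UNIV. r a q * A (unitv q) b)"

end

theory Submission
  imports Defs
begin


lemma fsum_apply: "(sum f A) x = (\<Sum>a\<in>A. f a x)"
  by (induction A rule: infinite_finite_induct) auto

lemma sum_UNIV_plus:
  "(\<Sum>p\<in>(UNIV::('a::finite + 'b::finite) set). f p) = (\<Sum>a\<in>UNIV. f (Inl a)) + (\<Sum>j\<in>UNIV. f (Inr j))"
proof -
  have "(\<Sum>p\<in>(UNIV::('a + 'b) set). f p) = sum f (Inl ` UNIV \<union> Inr ` UNIV)"
    by (simp add: UNIV_sum[symmetric])
  also have "\<dots> = sum f (Inl ` UNIV) + sum f (Inr ` UNIV)"
    by (rule sum.union_disjoint) auto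
  also have "\<dots> = (\<Sum>a\<in>UNIV. f (Inl a)) + (\<Sum>j\<in>UNIV. f (Inr j))"
    by (simp add: sum.reindex)
  finally show ?thesis .
qed

lemma lin_zero: "lin f \<Longrightarrow> f 0 = 0"
proof -
  assume "lin f"
  then have "f (scl 0 0) = scl 0 (f 0)" unfolding lin_def by blast
  moreover have "scl 0 (0::'a \<Rightarrow> 'b::field) = 0" by (simp add: scl_def zero_fun_def)
  moreover have "scl 0 (f 0) = 0" by (simp add: scl_def zero_fun_def)
  ultimately show ?thesis by metis
qed

lemma lin_sum: "lin f \<Longrightarrow> f (\<Sum>a\<in>A. g a) = (\<Sum>a\<in>A. f (g a))"
proof (induction A rule: infinite_finite_induct)
  case (insert x F)
  have "f (sum g (insert x F)) = f (g x + sum g F)" using insert(1,2) by simp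
  also have "\<dots> = f (g x) + f (sum g F)" using insert(4) unfolding lin_def by blast
  finally show ?case using insert.IH[OF insert.prems] insert(1,2) by (metis sum.insert)
qed (auto simp: lin_zero)

lemma vec_expand: "(x::'i::finite \<Rightarrow> 'k::field) = (\<Sum>c\<in>UNIV. scl (x c) (unitv c))"
proof (rule ext)
  fix b
  have "(\<Sum>c\<in>UNIV. scl (x c) (unitv c)) b = (\<Sum>c\<in>UNIV. if b = c then x c else 0)"
    unfolding fsum_apply scl_def unitv_def by (rule sum.cong) auto
  then show "x b = (\<Sum>c\<in>UNIV. scl (x c) (unitv c)) b" by simp
qed

lemma lin_expand:
  fixes f :: "('i::finite \<Rightarrow> 'k::field) \<Rightarrow> ('j \<Rightarrow> 'k)"
  assumes "lin f" shows "f x b = (\<Sum>c\<in>UNIV. x c * f (unitv c) b)"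
proof -
  have "f x = f (\<Sum>c\<in>UNIV. scl (x c) (unitv c))" by (subst vec_expand[of x]) simp
  also have "\<dots> = (\<Sum>c\<in>UNIV. scl (x c) (f (unitv c)))" using assms by (simp add: lin_sum) (simp add: lin_def)
  finally show ?thesis by (simp add: fsum_apply scl_def)
qed

lemma lin_diff: "lin f \<Longrightarrow> f (x - y) = f x - f y"
proof -
  assume l: "lin f"
  have a: "x - y = x + scl (-1) y" by (rule ext) (simp add: scl_def)
  have b: "f x - f y = f x + scl (-1) (f y)" by (rule ext) (simp add: scl_def)
  have "f (x + scl (-1) y) = f x + scl (-1) (f y)" using l unfolding lin_def by simp
  then show ?thesis using a b by metis
qed

lemma rK_vals:
  "rK K (Inl a) (Inl b) = 0" "rK K (Inl a) (Inr j) = K (unitv j) a"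
  "rK K (Inr j) (Inl a) = - K (unitv j) a" "rK K (Inr j) (Inr l) = 0"
  by (simp_all add: rK_def Kbar_def flip_def)

lemma parts:
  "gpart (unitv (Inl p) :: 'i + 'j \<Rightarrow> 'k::field) = unitv p"
  "wpart (unitv (Inl p) :: 'i + 'j \<Rightarrow> 'k::field) = 0"
  "gpart (unitv (Inr l) :: 'i + 'j \<Rightarrow> 'k::field) = 0"
  "wpart (unitv (Inr l) :: 'i + 'j \<Rightarrow> 'k::field) = unitv l"
  by (auto simp: gpart_def wpart_def unitv_def)

lemma pairing_unitv: "pairing (unitv l) v = v l"
proof -
  have "pairing (unitv l) v = (\<Sum>j\<in>UNIV. if j = l then v j else 0)"
    unfolding pairing_def unitv_def by (rule sum.cong) auto
  then show ?thesis by simp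
qed

lemma dual_rep_0: "dual_rep rho x 0 = 0"
  by (rule ext) (simp add: dual_rep_def pairing_def)

lemma dual_rep_unitv: "dual_rep rho x (unitv l) i = - rho x (unitv i) l"
  by (simp add: dual_rep_def pairing_unitv)

lemma dual_rep_x0: "(\<forall>u. lin (\<lambda>x. rho x u)) \<Longrightarrow> dual_rep rho 0 xi = 0"
  by (rule ext) (simp add: dual_rep_def pairing_def lin_zero[of "\<lambda>x. rho x _"])

lemma SB:
  fixes br :: "('i::finite \<Rightarrow> 'k::field) \<Rightarrow> ('i \<Rightarrow> 'k) \<Rightarrow> ('i \<Rightarrow> 'k)"
    and rho :: "('i \<Rightarrow> 'k) \<Rightarrow> ('j::finite \<Rightarrow> 'k) \<Rightarrow> ('j \<Rightarrow> 'k)"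
  assumes l1: "\<forall>x. lin (br x)" and l2: "\<forall>y. lin (\<lambda>x. br x y)" and l3: "\<forall>u. lin (\<lambda>x. rho x u)"
  shows
  "semidirect_br br rho (unitv (Inl p)) (unitv (Inl s)) (Inl a) = br (unitv p) (unitv s) a"
  "semidirect_br br rho (unitv (Inl p)) (unitv (Inl s)) (Inr i) = 0"
  "semidirect_br br rho (unitv (Inl p)) (unitv (Inr l)) (Inl a) = 0"
  "semidirect_br br rho (unitv (Inl p)) (unitv (Inr l)) (Inr i) = - rho (unitv p) (unitv i) l"
  "semidirect_br br rho (unitv (Inr l)) (unitv (Inl s)) (Inl a) = 0"
  "semidirect_br br rho (unitv (Inr l)) (unitv (Inl s)) (Inr i) = rho (unitv s) (unitv i) l"
  "semidirect_br br rho (unitv (Inr l)) (unitv (Inr m)) z = 0"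
proof -
  have b0: "br x 0 = 0" for x using l1 lin_zero by blast
  have b0': "br 0 y = 0" for y using l2 lin_zero[of "\<lambda>x. br x y"] by blast
  have d0: "dual_rep rho 0 xi = 0" for xi using dual_rep_x0[OF l3] .
  show "semidirect_br br rho (unitv (Inl p)) (unitv (Inl s)) (Inl a) = br (unitv p) (unitv s) a"
    "semidirect_br br rho (unitv (Inl p)) (unitv (Inl s)) (Inr i) = 0"
    "semidirect_br br rho (unitv (Inl p)) (unitv (Inr l)) (Inl a) = 0"
    "semidirect_br br rho (unitv (Inl p)) (unitv (Inr l)) (Inr i) = - rho (unitv p) (unitv i) l"
    "semidirect_br br rho (unitv (Inr l)) (unitv (Inl s)) (Inl a) = 0"
    "semidirect_br br rho (unitv (Inr l)) (unitv (Inl s)) (Inr i) = rho (unitv s) (unitv i) l"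
    "semidirect_br br rho (unitv (Inr l)) (unitv (Inr m)) z = 0"
    by (auto simp: semidirect_br_def parts b0 b0' d0 dual_rep_0 dual_rep_unitv split: sum.split)
qed

lemma X1:
  fixes br :: "('i::finite \<Rightarrow> 'k::field) \<Rightarrow> ('i \<Rightarrow> 'k) \<Rightarrow> ('i \<Rightarrow> 'k)"
  assumes l1: "\<forall>x. lin (br x)" and l2: "\<forall>y. lin (\<lambda>x. br x y)"
  shows "br x y a = (\<Sum>p\<in>UNIV. \<Sum>s\<in>UNIV. x p * y s * br (unitv p) (unitv s) a)"
proof -
  have "br x y a = (\<Sum>s\<in>UNIV. y s * br x (unitv s) a)" using l1 by (intro lin_expand) blast
  also have "\<dots> = (\<Sum>s\<in>UNIV. y s * (\<Sum>p\<in>UNIV. x p * br (unitv p) (unitv s) a))"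
  proof (rule sum.cong[OF refl])
    fix s
    have "br x (unitv s) a = (\<Sum>p\<in>UNIV. x p * br (unitv p) (unitv s) a)"
      using l2 lin_expand[of "\<lambda>x. br x (unitv s)" x a] by blast
    then show "y s * br x (unitv s) a = y s * (\<Sum>p\<in>UNIV. x p * br (unitv p) (unitv s) a)" by (rule arg_cong)
  qed
  also have "\<dots> = (\<Sum>s\<in>UNIV. \<Sum>p\<in>UNIV. x p * y s * br (unitv p) (unitv s) a)"
    by (simp add: sum_distrib_left mult.assoc mult.left_commute)
  also have "\<dots> = (\<Sum>p\<in>UNIV. \<Sum>s\<in>UNIV. x p * y s * br (unitv p) (unitv s) a)"
    by (rule sum.swap)
  finally show ?thesis .
qed

lemma X2:
  fixes rho :: "('i::finite \<Rightarrow> 'k::field) \<Rightarrow> ('j::finite \<Rightarrow> 'k) \<Rightarrow> ('j \<Rightarrow> 'k)"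
    and K :: "('j \<Rightarrow> 'k) \<Rightarrow> ('i \<Rightarrow> 'k)"
  assumes l3: "\<forall>u. lin (\<lambda>x. rho x u)" and lK: "lin K"
  shows "K (rho x u) a = (\<Sum>m\<in>UNIV. \<Sum>t\<in>UNIV. K (unitv m) a * x t * rho (unitv t) u m)"
proof -
  have "K (rho x u) a = (\<Sum>m\<in>UNIV. rho x u m * K (unitv m) a)" using lK by (intro lin_expand)
  also have "\<dots> = (\<Sum>m\<in>UNIV. (\<Sum>t\<in>UNIV. x t * rho (unitv t) u m) * K (unitv m) a)"
  proof (rule sum.cong[OF refl])
    fix m
    have "rho x u m = (\<Sum>t\<in>UNIV. x t * rho (unitv t) u m)"
      using l3 lin_expand[of "\<lambda>x. rho x u" x m] by blast
    then show "rho x u m * K (unitv m) a = (\<Sum>t\<in>UNIV. x t * rho (unitv t) u m) * K (unitv m) a" by simp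
  qed
  also have "\<dots> = (\<Sum>m\<in>UNIV. \<Sum>t\<in>UNIV. K (unitv m) a * x t * rho (unitv t) u m)"
    by (intro sum.cong refl) (simp add: sum_distrib_left mult_ac)
  finally show ?thesis .
qed

lemma key:
  fixes br :: "('i::finite \<Rightarrow> 'k::field) \<Rightarrow> ('i \<Rightarrow> 'k) \<Rightarrow> ('i \<Rightarrow> 'k)"
    and rho :: "('i \<Rightarrow> 'k) \<Rightarrow> ('j::finite \<Rightarrow> 'k) \<Rightarrow> ('j \<Rightarrow> 'k)"
    and K :: "('j \<Rightarrow> 'k) \<Rightarrow> ('i \<Rightarrow> 'k)"
  assumes l1: "\<forall>x. lin (br x)" and l2: "\<forall>y. lin (\<lambda>x. br x y)" and l3: "\<forall>u. lin (\<lambda>x. rho x u)"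
    and lK: "lin K" and RB: "\<forall>u v. br (K u) (K v) = K (rho (K u) v - rho (K v) u)"
  shows "(\<Sum>p\<in>UNIV. \<Sum>s\<in>UNIV. K (unitv j) p * K (unitv l) s * br (unitv p) (unitv s) a)
    = (\<Sum>m\<in>UNIV. \<Sum>t\<in>UNIV. K (unitv m) a * K (unitv j) t * rho (unitv t) (unitv l) m)
    - (\<Sum>m\<in>UNIV. \<Sum>t\<in>UNIV. K (unitv m) a * K (unitv l) t * rho (unitv t) (unitv j) m)"
proof -
  have "br (K (unitv j)) (K (unitv l)) a = K (rho (K (unitv j)) (unitv l)) a - K (rho (K (unitv l)) (unitv j)) a"
    using RB lin_diff[OF lK] by simp
  then show ?thesis
    unfolding X1[OF l1 l2, of "K (unitv j)" "K (unitv l)" a] X2[OF l3 lK, of "K (unitv j)" "unitv l" a]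
      X2[OF l3 lK, of "K (unitv l)" "unitv j" a] .
qed

lemma swapK:
  fixes K :: "('j::finite \<Rightarrow> 'k::field) \<Rightarrow> ('i \<Rightarrow> 'k)" and rho :: "('i \<Rightarrow> 'k) \<Rightarrow> ('j \<Rightarrow> 'k) \<Rightarrow> ('j \<Rightarrow> 'k)"
  shows
  "(\<Sum>p\<in>UNIV. \<Sum>j\<in>UNIV. K (unitv b) p * K (unitv j) a * rho (unitv p) (unitv c) j)
   = (\<Sum>m\<in>UNIV. \<Sum>t\<in>UNIV. K (unitv m) a * K (unitv b) t * rho (unitv t) (unitv c) (m::'j::finite))"
  by (subst sum.swap) (rule sum.cong[OF refl], rule sum.cong[OF refl], simp add: mult_ac)



lemma test:
  fixes br :: "('i::finite \<Rightarrow> 'k::field) \<Rightarrow> ('i \<Rightarrow> 'k) \<Rightarrow> ('i \<Rightarrow> 'k)"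
    and rho :: "('i \<Rightarrow> 'k) \<Rightarrow> ('j::finite \<Rightarrow> 'k) \<Rightarrow> ('j \<Rightarrow> 'k)"
    and K :: "('j \<Rightarrow> 'k) \<Rightarrow> ('i \<Rightarrow> 'k)"
  assumes l1: "\<forall>x. lin (br x)" and l2: "\<forall>y. lin (\<lambda>x. br x y)" and l3: "\<forall>u. lin (\<lambda>x. rho x u)"
    and lK: "lin K" and RB: "\<forall>u v. br (K u) (K v) = K (rho (K u) v - rho (K v) u)"
  shows "cybe (semidirect_br br rho) (rK K) x y z = 0"
  unfolding cybe_def
  apply (simp only: sum_UNIV_plus)
  apply (cases x; cases y; cases z)
  apply (simp_all add: SB[OF l1 l2 l3] rK_vals)
  apply (simp_all add: key[OF l1 l2 l3 lK RB] sum_negf swapK)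
  done


lemma OP:
  fixes E :: "('i::finite \<Rightarrow> 'k::field) \<Rightarrow> ('i \<Rightarrow> 'k)" and T :: "('j::finite \<Rightarrow> 'k) \<Rightarrow> ('j \<Rightarrow> 'k)"
  assumes lE: "lin E"
  shows "semidirect_op E T (unitv (Inl c)) (Inl a) = E (unitv c) a"
    "semidirect_op E T (unitv (Inl c)) (Inr j) = 0"
    "semidirect_op E T (unitv (Inr m)) (Inl a) = 0"
    "semidirect_op E T (unitv (Inr m)) (Inr j) = T (unitv j) m"
  using lin_zero[OF lE]
  by (simp_all add: semidirect_op_def parts dual_map_def pairing_unitv)
     (simp_all add: pairing_def)

lemma EK:
  fixes E :: "('i::finite \<Rightarrow> 'k::field) \<Rightarrow> ('i \<Rightarrow> 'k)" and T :: "('j::finite \<Rightarrow> 'k) \<Rightarrow> ('j \<Rightarrow> 'k)"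
    and K :: "('j \<Rightarrow> 'k) \<Rightarrow> ('i \<Rightarrow> 'k)"
  assumes lE: "lin E" and lK: "lin K" and EKT: "\<forall>u. E (K u) = K (T u)"
  shows "(\<Sum>c\<in>UNIV. E (unitv c) a * K (unitv j) c) = (\<Sum>m\<in>UNIV. K (unitv m) a * T (unitv j) m)"
proof -
  have "(\<Sum>c\<in>UNIV. E (unitv c) a * K (unitv j) c) = E (K (unitv j)) a"
    using lin_expand[OF lE, of "K (unitv j)" a] by (simp add: mult.commute)
  also have "\<dots> = K (T (unitv j)) a" using EKT by simp
  also have "\<dots> = (\<Sum>m\<in>UNIV. K (unitv m) a * T (unitv j) m)"
    using lin_expand[OF lK, of "T (unitv j)" a] by (simp add: mult.commute)
  finally show ?thesis .
qed

lemma EK2: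
  fixes E :: "('i::finite \<Rightarrow> 'k::field) \<Rightarrow> ('i \<Rightarrow> 'k)" and T :: "('j::finite \<Rightarrow> 'k) \<Rightarrow> ('j \<Rightarrow> 'k)"
    and K :: "('j \<Rightarrow> 'k) \<Rightarrow> ('i \<Rightarrow> 'k)"
  assumes lE: "lin E" and lK: "lin K" and EKT: "\<forall>u. E (K u) = K (T u)"
  shows "(\<Sum>c\<in>UNIV. K (unitv j) c * E (unitv c) a) = (\<Sum>m\<in>UNIV. T (unitv j) m * K (unitv m) a)"
  using EK[OF lE lK EKT, of a j] by (simp add: mult.commute)

lemma test2:
  fixes E :: "('i::finite \<Rightarrow> 'k::field) \<Rightarrow> ('i \<Rightarrow> 'k)" and T :: "('j::finite \<Rightarrow> 'k) \<Rightarrow> ('j \<Rightarrow> 'k)"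
    and K :: "('j \<Rightarrow> 'k) \<Rightarrow> ('i \<Rightarrow> 'k)"
  assumes lE: "lin E" and lK: "lin K" and EKT: "\<forall>u. E (K u) = K (T u)"
  shows "op_tensor_diff (semidirect_op E T) (rK K) x y = 0"
  unfolding op_tensor_diff_def
  apply (simp only: sum_UNIV_plus)
  apply (cases x; cases y)
  apply (simp_all add: OP[OF lE] rK_vals EK[OF lE lK EKT] EK2[OF lE lK EKT] sum_negf)
  done



theorem theorem6p9:
  fixes br :: "('i::finite \<Rightarrow> 'k::field_char_0) \<Rightarrow> ('i \<Rightarrow> 'k) \<Rightarrow> ('i \<Rightarrow> 'k)"
    and E :: "('i \<Rightarrow> 'k) \<Rightarrow> ('i \<Rightarrow> 'k)"
    and rho :: "('i \<Rightarrow> 'k) \<Rightarrow> ('j::finite \<Rightarrow> 'k) \<Rightarrow> ('j \<Rightarrow> 'k)"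
    and T :: "('j \<Rightarrow> 'k) \<Rightarrow> ('j \<Rightarrow> 'k)"
    and K :: "('j \<Rightarrow> 'k) \<Rightarrow> ('i \<Rightarrow> 'k)"
  assumes "alg_closed TYPE('k)"
    and "ENL br E"
    and "ENE_rep br E T rho"
    and "ENE_RB br E T rho K"
  shows "rK K = (\<lambda>p q. - flip (rK K) p q)
    \<and> cybe (semidirect_br br rho) (rK K) = (\<lambda>a b c. 0)
    \<and> op_tensor_diff (semidirect_op E T) (rK K) = (\<lambda>a b. 0)"
proof -
  have l1: "\<forall>x. lin (br x)" and l2: "\<forall>y. lin (\<lambda>x. br x y)" and lE: "lin E"
    using assms(2) unfolding ENL_def lie_algebra_def by blast+
  have l3: "\<forall>u. lin (\<lambda>x. rho x u)"
    using assms(3) unfolding ENE_rep_def representation_def by blast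
  have lK: "lin K" and RB: "\<forall>u v. br (K u) (K v) = K (rho (K u) v - rho (K v) u)"
    and EKT: "\<forall>u. E (K u) = K (T u)"
    using assms(4) unfolding ENE_RB_def by blast+
  have s: "rK K = (\<lambda>p q. - flip (rK K) p q)"
    by (intro ext) (simp add: rK_def flip_def)
  have c: "cybe (semidirect_br br rho) (rK K) = (\<lambda>a b c. 0)"
    by (intro ext) (rule test[OF l1 l2 l3 lK RB])
  have o: "op_tensor_diff (semidirect_op E T) (rK K) = (\<lambda>a b. 0)"
    by (intro ext) (rule test2[OF lE lK EKT])
  show ?thesis using s c o by blast
qed

end
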